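(* Let $n\ge0$ and $k\ge1$ be integers, $\rho\ne0$ real, $0\le q<1$, and $z$ a complex number. Then $$\sum_{m=0}^n S_1\!\left(n,m,\frac{z}{\rho}\right)\rho^{-m}B_{m,\rho,q}^{(k)}(z)=\frac{n!}{\rho^n[n+1]_q^k},$$ $$\sum_{m=0}^n S_2\!\left(n,m,\frac{z}{\rho}\right)\rho^{-m}c_{m,\rho,q}^{(k)}(z)=\frac{1}{\rho^n[n+1]_q^k},$$ $$\sum_{m=0}^n S_2\!\left(n,m,-\frac{z}{\rho}\right)\rho^{-m}\widehat c_{m,\rho,q}^{(k)}(z)=\frac{(-1)^n}{\rho^n[n+1]_q^k}.$$
   Context: For real $0\le q<1$ (with $0^0=1$), $[x]_q=\frac{1-q^x}{1-q}$. ${\rm Li}_{k,q}(w)=\sum_{m\ge1}w^m/[m]_q^k$. The $q$-poly-Bernoulli polynomials with parameter $\rho$: $\frac{\rho}{1-e^{-\rho t}}{\rm Li}_{k,q}\left(\frac{1-e^{-\rho t}}{\rho}\right)e^{-tz}=\sum_{n\ge0} B_{n,\rho,q}^{(k)}(z)\frac{t^n}{n!}$ (formal power series in $t$). Jackson's $q$-integral: $\int_0^1 f(x)\,d_qx=(1-q)\sum_{j\ge0} f(q^j)q^j$; multiple integrals are iterated. $(x)_n=x(x-1)\cdots(x-n+1)$, $(x)_0=1$. The $q$-poly-Cauchy polynomials of the first and second kind with parameter $\rho$ are $c_{n,\rho,q}^{(k)}(z)=\rho^n\int_0^1\cdots\int_0^1\left(\frac{x_1\cdots x_k-z}{\rho}\right)_n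 d_qx_1\cdots d_qx_k$ and $\widehat c_{n,\rho,q}^{(k)}(z)=\rho^n\int_0^1\cdots\int_0^1\left(\frac{-x_1\cdots x_k+z}{\rho}\right)_n d_qx_1\cdots d_qx_k$ ($k$-fold). Weighted Stirling numbers (Carlitz): $\frac{(1-t)^{-x}(-\ln(1-t))^m}{m!}=\sum_{n\ge0}S_1(n,m,x)\frac{t^n}{n!}$ and $\frac{e^{xt}(e^t-1)^m}{m!}=\sum_{n\ge0}S_2(n,m,x)\frac{t^n}{n!}$. *)

theory Defs
  imports Complex_Main "HOL-Computational_Algebra.Formal_Power_Series"
begin

definition qnum :: "real \<Rightarrow> nat \<Rightarrow> real" where
  "qnum q x = (1 - q ^ x) / (1 - q)"

definition qpolylog_fps :: "nat \<Rightarrow> real \<Rightarrow> complex fps" where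
  "qpolylog_fps k q = Abs_fps (\<lambda>m. if m = 0 then 0 else 1 / (complex_of_real (qnum q m)) ^ k)"

text \<open>q-poly-Bernoulli polynomials: the generating function
  rho/(1 - e^{-rho t}) * Li_{k,q}((1 - e^{-rho t})/rho) * e^{-t z}
  is written as Li_{k,q}(u(t)) / u(t) * e^{-t z} with u(t) = (1 - e^{-rho t})/rho
  (u has zero constant term and Li_{k,q}(u) is divisible by u in the power series ring).\<close>
definition qpB_fps :: "nat \<Rightarrow> real \<Rightarrow> real \<Rightarrow> complex \<Rightarrow> complex fps" where
  "qpB_fps k \<rho> q z =
     (let u = fps_const (complex_of_real (1 / \<rho>)) * (1 - fps_exp (- complex_of_real \<rho>))
      in (fps_compose (qpolylog_fps k q) u / u) * fps_exp (- z))"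

definition qpoly_bernoulli :: "nat \<Rightarrow> nat \<Rightarrow> real \<Rightarrow> real \<Rightarrow> complex \<Rightarrow> complex" where
  "qpoly_bernoulli k n \<rho> q z = fact n * fps_nth (qpB_fps k \<rho> q z) n"

definition jackson_int :: "real \<Rightarrow> (real \<Rightarrow> complex) \<Rightarrow> complex" where
  "jackson_int q f = complex_of_real (1 - q) * (\<Sum>j. f (q ^ j) * complex_of_real (q ^ j))"

fun jackson_multi :: "real \<Rightarrow> nat \<Rightarrow> (real list \<Rightarrow> complex) \<Rightarrow> complex" where
  "jackson_multi q 0 F = F []"
| "jackson_multi q (Suc k) F = jackson_int q (\<lambda>x. jackson_multi q k (\<lambda>xs. F (x # xs)))"

definition falling :: "complex \<Rightarrow> nat \<Rightarrow> complex" where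
  "falling x n = (\<Prod>i<n. x - of_nat i)"

definition qpoly_cauchy1 :: "nat \<Rightarrow> nat \<Rightarrow> real \<Rightarrow> real \<Rightarrow> complex \<Rightarrow> complex" where
  "qpoly_cauchy1 k n \<rho> q z = complex_of_real \<rho> ^ n *
     jackson_multi q k (\<lambda>xs. falling ((complex_of_real (prod_list xs) - z) / complex_of_real \<rho>) n)"

definition qpoly_cauchy2 :: "nat \<Rightarrow> nat \<Rightarrow> real \<Rightarrow> real \<Rightarrow> complex \<Rightarrow> complex" where
  "qpoly_cauchy2 k n \<rho> q z = complex_of_real \<rho> ^ n *
     jackson_multi q k (\<lambda>xs. falling ((- complex_of_real (prod_list xs) + z) / complex_of_real \<rho>) n)"

text \<open>Weighted Stirling numbers (Carlitz), via exponential generating functions.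
  (1-t)^{-x} = fps_binomial (-x) composed with -t;  -ln(1-t) = -(ln(1+s) at s = -t).\<close>
definition wstirling1 :: "nat \<Rightarrow> nat \<Rightarrow> complex \<Rightarrow> complex" where
  "wstirling1 n m x = fact n * fps_nth
     (fps_compose (fps_binomial (- x)) (- fps_X)
      * (- fps_compose (fps_ln 1) (- fps_X)) ^ m / fps_const (fact m)) n"

definition wstirling2 :: "nat \<Rightarrow> nat \<Rightarrow> complex \<Rightarrow> complex" where
  "wstirling2 n m x = fact n * fps_nth
     (fps_exp x * (fps_exp 1 - 1) ^ m / fps_const (fact m)) n"

end

theory Submission
  imports Defs "HOL-Computational_Algebra.Polynomial"
begin
unbundle fps_syntax

lemma qpow_lt: "0 \<le> (q::real) \<Longrightarrow> q < 1 \<Longrightarrow> q ^ Suc i < 1"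
proof -
  assume a: "0 \<le> q" "q < 1"
  have "q ^ i \<le> 1" using a by (simp add: power_le_one_iff)
  then have "q * q ^ i \<le> q" using a mult_left_le by blast
  then show ?thesis using a by simp
qed

lemma qnum_pos: "0 \<le> q \<Longrightarrow> q < 1 \<Longrightarrow> qnum q (Suc i) > 0"
proof -
  assume a: "0 \<le> q" "q < 1"
  have "q ^ Suc i < 1" using a qpow_lt by blast
  then show ?thesis using a by (simp add: qnum_def)
qed

lemma jint_mono:
  assumes "0 \<le> q" "q < 1"
  shows "jackson_int q (\<lambda>x. complex_of_real x ^ i) = 1 / complex_of_real (qnum q (Suc i))"
proof -
  define w where "w = complex_of_real (q ^ Suc i)"
  have nw: "norm w < 1" unfolding w_def norm_of_real using assms qpow_lt[OF assms, of i] by simp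
  have eq: "(\<lambda>j. complex_of_real (q ^ j) ^ i * complex_of_real (q ^ j)) = (\<lambda>j. w ^ j)"
  proof
    fix j
    have "(q^j)^i * q^j = (q^Suc i)^j"
      by (simp add: power_mult[symmetric] power_add[symmetric] algebra_simps)
    then show "complex_of_real (q ^ j) ^ i * complex_of_real (q ^ j) = w ^ j"
      unfolding w_def by (metis of_real_mult of_real_power)
  qed
  have "jackson_int q (\<lambda>x. complex_of_real x ^ i) = complex_of_real (1 - q) * (1 / (1 - w))"
    unfolding jackson_int_def eq using suminf_geometric[OF nw] by simp
  also have "\<dots> = 1 / complex_of_real (qnum q (Suc i))"
  proof -
    have "q ^ Suc i < 1" using assms qpow_lt by blast
    then have "1 - w \<noteq> 0" unfolding w_def
      by (metis of_real_1 of_real_eq_iff order_less_irrefl right_minus_eq) 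
    then show ?thesis using assms unfolding qnum_def w_def by (simp add: field_simps)
  qed
  finally show ?thesis .
qed

lemma summable_mono_j:
  assumes "0 \<le> q" "q < 1"
  shows "summable (\<lambda>j. complex_of_real (q ^ j) ^ i * complex_of_real (q ^ j))"
proof -
  define w where "w = complex_of_real (q ^ Suc i)"
  have nw: "norm w < 1" unfolding w_def norm_of_real using assms qpow_lt[OF assms, of i] by simp
  have eq: "(\<lambda>j. complex_of_real (q ^ j) ^ i * complex_of_real (q ^ j)) = (\<lambda>j. w ^ j)"
  proof
    fix j
    have "(q^j)^i * q^j = (q^Suc i)^j"
      by (simp add: power_mult[symmetric] power_add[symmetric] algebra_simps)
    then show "complex_of_real (q ^ j) ^ i * complex_of_real (q ^ j) = w ^ j"
      unfolding w_def by (metis of_real_mult of_real_power)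
  qed
  show ?thesis unfolding eq using summable_geometric[OF nw] .
qed

lemma jint_poly:
  assumes "0 \<le> q" "q < 1"
  shows "jackson_int q (\<lambda>x. \<Sum>i<N. b i * complex_of_real x ^ i) = (\<Sum>i<N. b i / complex_of_real (qnum q (Suc i)))"
proof -
  have "(\<Sum>j. (\<Sum>i<N. b i * complex_of_real (q^j) ^ i) * complex_of_real (q ^ j))
      = (\<Sum>j. \<Sum>i<N. b i * (complex_of_real (q^j) ^ i * complex_of_real (q ^ j)))"
    by (simp add: sum_distrib_right mult.assoc)
  also have "\<dots> = (\<Sum>i<N. \<Sum>j. b i * (complex_of_real (q^j) ^ i * complex_of_real (q ^ j)))"
    by (rule suminf_sum) (intro summable_mult summable_mono_j assms)
  also have "\<dots> = (\<Sum>i<N. b i * (\<Sum>j. (complex_of_real (q^j) ^ i * complex_of_real (q ^ j))))"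
    by (intro sum.cong refl suminf_mult summable_mono_j assms)
  finally have *: "(\<Sum>j. (\<Sum>i<N. b i * complex_of_real (q^j) ^ i) * complex_of_real (q ^ j)) = 
     (\<Sum>i<N. b i * (\<Sum>j. (complex_of_real (q^j) ^ i * complex_of_real (q ^ j))))" .
  have "jackson_int q (\<lambda>x. \<Sum>i<N. b i * complex_of_real x ^ i) = 
     (\<Sum>i<N. b i * jackson_int q (\<lambda>x. complex_of_real x ^ i))"
    unfolding jackson_int_def * by (simp add: sum_distrib_left mult_ac)
  also have "\<dots> = (\<Sum>i<N. b i / complex_of_real (qnum q (Suc i)))"
    using jint_mono[OF assms] by simp
  finally show ?thesis .
qed

lemma jmulti_poly:
  assumes "0 \<le> q" "q < 1"
  shows "jackson_multi q k (\<lambda>xs. \<Sum>i<N. a i * (c * complex_of_real (prod_list xs)) ^ i)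
     = (\<Sum>i<N. a i * c ^ i / complex_of_real (qnum q (Suc i)) ^ k)"
proof (induction k arbitrary: c)
  case 0
  then show ?case by simp
next
  case (Suc k)
  have "jackson_multi q (Suc k) (\<lambda>xs. \<Sum>i<N. a i * (c * complex_of_real (prod_list xs)) ^ i)
     = jackson_int q (\<lambda>x. jackson_multi q k (\<lambda>xs. \<Sum>i<N. a i * ((c * complex_of_real x) * complex_of_real (prod_list xs)) ^ i))"
    by (simp add: mult.assoc)
  also have "\<dots> = jackson_int q (\<lambda>x. \<Sum>i<N. a i * (c * complex_of_real x) ^ i / complex_of_real (qnum q (Suc i)) ^ k)"
    by (simp only: Suc.IH)
  also have "\<dots> = jackson_int q (\<lambda>x. \<Sum>i<N. (a i * c ^ i / complex_of_real (qnum q (Suc i)) ^ k) * complex_of_real x ^ i)"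
    by (simp add: power_mult_distrib mult_ac)
  also have "\<dots> = (\<Sum>i<N. (a i * c ^ i / complex_of_real (qnum q (Suc i)) ^ k) / complex_of_real (qnum q (Suc i)))"
    by (rule jint_poly[OF assms])
  also have "\<dots> = (\<Sum>i<N. a i * c ^ i / complex_of_real (qnum q (Suc i)) ^ Suc k)"
    by (simp add: field_simps)
  finally show ?case .
qed

lemma trunc_lemma:
  fixes G F N :: "complex fps"
  assumes N0: "N $ 0 = 0"
  shows "(G * (\<Sum>m=0..n. fps_const (F$m) * N^m)) $ n = (G * (F oo N)) $ n"
proof -
  have "(\<Sum>m=0..n. fps_const (F$m) * N^m) $ j = (F oo N) $ j" if "j \<le> n" for j
  proof -
    have "(\<Sum>m=0..n. fps_const (F$m) * N^m) $ j = (\<Sum>m=0..n. F$m * (N^m $ j))"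
      by (simp add: fps_sum_nth)
    also have "\<dots> = (\<Sum>m=0..j. F$m * (N^m $ j))"
      by (rule sum.mono_neutral_right) (use that startsby_zero_power_prefix[OF N0] in auto)
    also have "\<dots> = (F oo N) $ j" by (simp add: fps_compose_nth)
    finally show ?thesis .
  qed
  then show ?thesis unfolding fps_mult_nth by (intro sum.cong) auto
qed

lemma exp_ln: "fps_exp (c::complex) oo fps_ln 1 = fps_binomial c"
proof -
  let ?D = "fps_exp c oo fps_ln 1"
  have "fps_deriv ?D = (fps_const c * fps_exp c oo fps_ln 1) * inverse (1 + fps_X)"
    by (simp add: fps_compose_deriv fps_ln_deriv)
  also have "\<dots> = (fps_const c * ?D) / (1 + fps_X)"
    by (simp add: fps_divide_unit fps_const_mult_apply_left)
  finally have "fps_deriv ?D = (fps_const c * ?D) / (1 + fps_X)" .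
  then have "?D = fps_const (?D $ 0) * fps_binomial c"
    using fps_binomial_ODE_unique by blast
  then show ?thesis by simp
qed

lemma binom_exp: "fps_binomial (w::complex) oo (fps_exp 1 - 1) = fps_exp w"
proof -
  have "fps_binomial w oo (fps_exp 1 - 1) = fps_exp w oo (fps_ln 1 oo (fps_exp 1 - 1))"
    by (simp add: exp_ln[symmetric] fps_compose_assoc)
  also have "fps_ln 1 oo (fps_exp 1 - 1) = fps_X"
    by (simp add: fps_ln_fps_exp_inv fps_inv_fps_exp_compose)
  finally show ?thesis by simp
qed

lemma exp_N:
  fixes r d :: complex
  assumes "r \<noteq> 0"
  shows "fps_exp d oo (fps_const (1/r) * - (fps_ln 1 oo - fps_X)) = fps_binomial (- d / r) oo - fps_X"
proof -
  have N: "fps_const (1/r) * - (fps_ln 1 oo - fps_X) = (fps_const (-1/r) * fps_X) oo (fps_ln 1 oo - fps_X)"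
  proof -
    have L20: "(fps_ln 1 oo - fps_X :: complex fps) $ 0 = 0" by simp
    have "(fps_const (-1/r) * fps_X) oo (fps_ln 1 oo - fps_X) = fps_const (-1/r) * (fps_ln 1 oo - fps_X)"
      by (simp only: fps_const_mult_apply_left[symmetric] fps_X_fps_compose_startby0[OF L20])
    then show ?thesis by (simp add: fps_eq_iff)
  qed
  have "fps_exp d oo (fps_const (1/r) * - (fps_ln 1 oo - fps_X))
      = (fps_exp d oo (fps_const (-1/r) * fps_X)) oo (fps_ln 1 oo - fps_X)"
    unfolding N by (rule fps_compose_assoc) simp_all
  also have "\<dots> = fps_exp (- d / r) oo (fps_ln 1 oo - fps_X)" by simp
  also have "\<dots> = (fps_exp (- d / r) oo fps_ln 1) oo - fps_X"
    by (rule fps_compose_assoc) simp_all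
  finally show ?thesis by (simp add: exp_ln)
qed

lemma alg1: "(e::complex) \<noteq> 0 \<Longrightarrow> a * b / e * c * (e * d) = a * (d * c * b)"
  by (simp add: field_simps)

lemma part1:
  fixes n k :: nat and \<rho> q :: real and z :: complex
  assumes "k \<ge> 1" and rho: "\<rho> \<noteq> 0" and q: "0 \<le> q" "q < 1"
  shows "(\<Sum>m=0..n. wstirling1 n m (z / complex_of_real \<rho>) * complex_of_real \<rho> powi (- int m)
            * qpoly_bernoulli k m \<rho> q z)
           = fact n / (complex_of_real \<rho> ^ n * complex_of_real (qnum q (n + 1)) ^ k)"
proof -
  define r where "r = complex_of_real \<rho>"
  have r0: "r \<noteq> 0" using rho by (simp add: r_def)
  define x where "x = z / r"
  define L where "L = qpolylog_fps k q"
  define L' where "L' = fps_shift 1 L"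
  define U where "U = fps_const (1/r) * (1 - fps_exp (- r))"
  define M where "M = - (fps_ln 1 oo - fps_X :: complex fps)"
  define N where "N = fps_const (1/r) * M"
  define Bin where "Bin = fps_binomial (- x) oo - fps_X"
  define Bf where "Bf = qpB_fps k \<rho> q z"
  have N0: "N $ 0 = 0" by (simp add: N_def M_def)
  have U0: "U $ 0 = 0" by (simp add: U_def)
  have U1: "U $ 1 = 1" using r0 by (simp add: U_def)
  have Unz: "U \<noteq> 0" using U1 by auto
  have LL': "L = L' * fps_X"
    by (rule fps_ext) (simp add: L_def L'_def qpolylog_fps_def)
  have Bf_eq: "Bf = (L' oo U) * fps_exp (- z)"
  proof -
    have "L oo U = (L' oo U) * U" unfolding LL' by (simp add: fps_compose_mult_distrib[OF U0] U0)
    then have "(L oo U) / U = L' oo U" using Unz by simp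
    then show ?thesis
      by (simp add: Bf_def qpB_fps_def Let_def L_def U_def r_def)
  qed
  have UN: "U oo N = fps_const (1/r) * fps_X"
  proof -
    have "U oo N = fps_const (1/r) * (1 - (fps_exp (- r) oo N))"
      by (simp only: U_def fps_const_mult_apply_left[symmetric] fps_compose_sub_distrib fps_compose_1)
    also have "fps_exp (- r) oo N = fps_binomial 1 oo - fps_X"
    proof -
      have "- (- r) / r = 1" using r0 by simp
      then show ?thesis using exp_N[OF r0, of "- r"] unfolding N_def M_def by simp
    qed
    also have "\<dots> = 1 - fps_X" by (simp add: fps_binomial_1 fps_compose_add_distrib)
    finally show ?thesis by simp
  qed
  have EN: "fps_exp (- z) oo N = fps_binomial x oo - fps_X"
  proof -
    have "- (- z) / r = x" by (simp add: x_def)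
    then show ?thesis using exp_N[OF r0, of "- z"] unfolding N_def M_def by simp
  qed
  have key: "Bin * (Bf oo N) = L' oo (fps_const (1/r) * fps_X)"
  proof -
    have "Bf oo N = (L' oo (U oo N)) * (fps_exp (- z) oo N)"
      unfolding Bf_eq by (simp only: fps_compose_mult_distrib[OF N0] fps_compose_assoc[OF N0 U0])
    also have "Bin * \<dots> = (L' oo (U oo N)) * ((fps_binomial (- x) * fps_binomial x) oo - fps_X)"
      unfolding EN Bin_def by (simp add: fps_compose_mult_distrib[symmetric] mult_ac)
    also have "fps_binomial (- x) * fps_binomial x = 1"
      by (simp flip: fps_binomial_add_mult)
    finally show ?thesis by (simp add: UN)
  qed
  have trm: "wstirling1 n m x * r powi (- int m) * qpoly_bernoulli k m \<rho> q z
      = fact n * (Bin * (fps_const (Bf $ m) * N ^ m)) $ n" for m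
  proof -
    have "N ^ m = fps_const ((1/r)^m) * M ^ m"
      by (simp add: N_def power_mult_distrib fps_const_power)
    then have "(Bin * (fps_const (Bf $ m) * N ^ m)) $ n = Bf $ m * (1/r)^m * (Bin * M^m) $ n"
      by (simp add: mult.left_commute[of Bin])
    moreover have "wstirling1 n m x = fact n * (Bin * M^m) $ n / fact m"
      by (simp add: wstirling1_def Bin_def M_def divide_inverse mult_ac)
    moreover have "qpoly_bernoulli k m \<rho> q z = fact m * Bf $ m"
      by (simp add: qpoly_bernoulli_def Bf_def)
    moreover have "r powi (- int m) = (1/r)^m"
      by (simp add: power_int_minus power_one_over inverse_eq_divide)
    ultimately show ?thesis using alg1[of "fact m :: complex"] by simp
  qed
  have "(\<Sum>m=0..n. wstirling1 n m x * r powi (- int m) * qpoly_bernoulli k m \<rho> q z)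
      = fact n * (Bin * (\<Sum>m=0..n. fps_const (Bf $ m) * N ^ m)) $ n"
    by (simp add: trm sum_distrib_left fps_sum_nth)
  also have "\<dots> = fact n * (Bin * (Bf oo N)) $ n" by (simp add: trunc_lemma[OF N0])
  also have "\<dots> = fact n * ((1/r)^n * L $ Suc n)" by (simp add: key L'_def)
  also have "\<dots> = fact n / (r ^ n * complex_of_real (qnum q (n + 1)) ^ k)"
    by (simp add: L_def qpolylog_fps_def field_simps)
  finally show ?thesis by (simp add: r_def x_def)
qed


lemma alg2: "(e::complex) \<noteq> 0 \<Longrightarrow> a * b / e * (c * e) = a * (c * b)"
  by (simp add: field_simps)

lemma cm: fixes G F :: "complex fps" shows "(G * (fps_const c * F)) $ n = c * (G * F) $ n"
proof -
  have "G * (fps_const c * F) = fps_const c * (G * F)" by (rule mult.left_commute)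
  then show ?thesis by (simp only: fps_mult_left_const_nth)
qed

lemma stir2:
  fixes a w :: complex
  shows "(\<Sum>m=0..n. wstirling2 n m a * falling w m) = (a + w) ^ n"
proof -
  define E1 where "E1 = (fps_exp 1 - 1 :: complex fps)"
  have E10: "E1 $ 0 = 0" by (simp add: E1_def)
  have trm: "wstirling2 n m a * falling w m
      = fact n * (fps_exp a * (fps_const (fps_binomial w $ m) * E1 ^ m)) $ n" for m
  proof -
    have f: "falling w m = (w gchoose m) * fact m"
      by (simp add: falling_def gbinomial_mult_fact' atLeast0LessThan)
    have "wstirling2 n m a = fact n * (fps_exp a * E1 ^ m) $ n / fact m"
      by (simp add: wstirling2_def E1_def divide_inverse cm)
    moreover have "(fps_exp a * (fps_const (fps_binomial w $ m) * E1 ^ m)) $ n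
        = (w gchoose m) * (fps_exp a * E1 ^ m) $ n"
      by (simp add: cm)
    ultimately show ?thesis using alg2[of "fact m :: complex"] f by simp
  qed
  have "(\<Sum>m=0..n. wstirling2 n m a * falling w m)
      = fact n * (fps_exp a * (\<Sum>m=0..n. fps_const (fps_binomial w $ m) * E1 ^ m)) $ n"
    by (simp add: trm sum_distrib_left fps_sum_nth)
  also have "\<dots> = fact n * (fps_exp a * (fps_binomial w oo E1)) $ n"
    using trunc_lemma[OF E10, of "fps_exp a" "fps_binomial w" n] by simp
  also have "\<dots> = fact n * (fps_exp (a + w)) $ n"
    by (simp add: E1_def binom_exp fps_exp_add_mult)
  also have "\<dots> = (a + w) ^ n" by (simp add: fps_exp_def)
  finally show ?thesis .
qed

lemma poly_as_sum:
  fixes p :: "complex poly"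
  assumes "degree p < N"
  shows "poly p x = (\<Sum>i<N. coeff p i * x ^ i)"
proof -
  have "poly p x = (\<Sum>i\<le>degree p. coeff p i * x ^ i)" by (rule poly_altdef)
  also have "\<dots> = (\<Sum>i<N. coeff p i * x ^ i)"
    by (rule sum.mono_neutral_left) (use assms in \<open>auto simp: coeff_eq_0\<close>)
  finally show ?thesis .
qed

lemma jm_poly:
  fixes p :: "complex poly"
  assumes q: "0 \<le> q" "q < 1" and "degree p < N"
  shows "jackson_multi q k (\<lambda>xs. poly p (complex_of_real (prod_list xs)))
       = (\<Sum>i<N. coeff p i / complex_of_real (qnum q (Suc i)) ^ k)"
proof -
  have "(\<lambda>xs. poly p (complex_of_real (prod_list xs)))
      = (\<lambda>xs. \<Sum>i<N. coeff p i * (1 * complex_of_real (prod_list xs)) ^ i)"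
    using poly_as_sum[OF assms(3)] by simp
  then show ?thesis using jmulti_poly[OF q, where k=k and N=N and a="coeff p" and c=1] by simp
qed

lemma cauchy_gen:
  fixes P :: "nat \<Rightarrow> complex poly" and s :: "nat \<Rightarrow> complex" and c :: complex
  assumes q: "0 \<le> q" "q < 1" and deg: "\<And>m. degree (P m) \<le> m"
    and id: "\<And>y. (\<Sum>m=0..n. s m * poly (P m) y) = (c * y) ^ n"
  shows "(\<Sum>m=0..n. s m * jackson_multi q k (\<lambda>xs. poly (P m) (complex_of_real (prod_list xs))))
      = c ^ n / complex_of_real (qnum q (Suc n)) ^ k"
proof -
  define W where "W i = complex_of_real (qnum q (Suc i)) ^ k" for i
  define Q where "Q = (\<Sum>m=0..n. smult (s m) (P m))"
  have "poly Q = poly (monom (c ^ n) n)"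
    by (rule ext) (simp add: Q_def poly_sum id poly_monom power_mult_distrib)
  then have Qm: "Q = monom (c ^ n) n" using poly_eq_poly_eq_iff by blast
  have "(\<Sum>m=0..n. s m * jackson_multi q k (\<lambda>xs. poly (P m) (complex_of_real (prod_list xs))))
      = (\<Sum>m=0..n. s m * (\<Sum>i<Suc n. coeff (P m) i / complex_of_real (qnum q (Suc i)) ^ k))"
  proof (intro sum.cong refl)
    fix m assume "m \<in> {0..n}"
    then have "degree (P m) < Suc n" using deg[of m] by auto
    then show "s m * jackson_multi q k (\<lambda>xs. poly (P m) (complex_of_real (prod_list xs)))
      = s m * (\<Sum>i<Suc n. coeff (P m) i / complex_of_real (qnum q (Suc i)) ^ k)"
      using jm_poly[OF q, where N="Suc n" and p="P m" and k=k] by simp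
  qed
  also have "\<dots> = (\<Sum>m=0..n. \<Sum>i<Suc n. s m * coeff (P m) i / W i)"
    by (simp only: W_def sum_distrib_left times_divide_eq_right)
  also have "\<dots> = (\<Sum>i<Suc n. \<Sum>m=0..n. s m * coeff (P m) i / W i)"
    by (rule sum.swap)
  also have "\<dots> = (\<Sum>i<Suc n. (\<Sum>m=0..n. s m * coeff (P m) i) / W i)"
    by (simp only: sum_divide_distrib)
  also have "\<dots> = (\<Sum>i<Suc n. coeff Q i / W i)"
    by (simp add: Q_def coeff_sum)
  also have "\<dots> = (\<Sum>i<Suc n. if i = n then c ^ n / W n else 0)"
    by (intro sum.cong refl) (simp add: Qm)
  also have "\<dots> = c ^ n / W n"
    by (subst sum.delta) auto
  finally show ?thesis by (simp add: W_def)
qed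

lemma part2:
  fixes n k :: nat and \<rho> q :: real and z :: complex
  assumes rho: "\<rho> \<noteq> 0" and q: "0 \<le> q" "q < 1"
  shows "(\<Sum>m=0..n. wstirling2 n m (z / complex_of_real \<rho>) * complex_of_real \<rho> powi (- int m)
            * qpoly_cauchy1 k m \<rho> q z)
           = 1 / (complex_of_real \<rho> ^ n * complex_of_real (qnum q (n + 1)) ^ k)"
proof -
  define r where "r = complex_of_real \<rho>"
  have r0: "r \<noteq> 0" using rho by (simp add: r_def)
  define P where "P m = (\<Prod>i<m. [: - (z / r) - of_nat i, 1 / r :])" for m
  have deg: "degree (P m) \<le> m" for m
  proof -
    have "degree (P m) \<le> (\<Sum>i<m. degree [: - (z / r) - of_nat i, 1 / r :])"
      unfolding P_def using degree_prod_sum_le[of "{..<m}" "\<lambda>i. [: - (z / r) - of_nat i, 1 / r :]"]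
      by (simp add: o_def)
    also have "\<dots> \<le> (\<Sum>i<m. 1)" by (intro sum_mono) simp
    finally show ?thesis by simp
  qed
  have fp: "falling ((y - z) / r) m = poly (P m) y" for y m
    unfolding falling_def P_def poly_prod
    by (intro prod.cong refl) (simp add: diff_divide_distrib)
  have trm: "wstirling2 n m (z / r) * r powi (- int m) * qpoly_cauchy1 k m \<rho> q z
     = wstirling2 n m (z / r) * jackson_multi q k (\<lambda>xs. poly (P m) (complex_of_real (prod_list xs)))" for m
  proof -
    have "r powi (- int m) * r ^ m = 1" using r0 by (simp add: power_int_minus)
    then show ?thesis unfolding qpoly_cauchy1_def r_def[symmetric] fp
      by (metis (no_types, lifting) mult.assoc mult_1)
  qed
  have idn: "(\<Sum>m=0..n. wstirling2 n m (z / r) * poly (P m) y) = ((1 / r) * y) ^ n" for y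
  proof -
    have "(\<Sum>m=0..n. wstirling2 n m (z / r) * poly (P m) y) = (z / r + (y - z) / r) ^ n"
      using stir2[of n "z / r" "(y - z) / r"] by (simp add: fp)
    also have "z / r + (y - z) / r = (1 / r) * y" by (simp add: diff_divide_distrib)
    finally show ?thesis .
  qed
  have "(\<Sum>m=0..n. wstirling2 n m (z / r) * r powi (- int m) * qpoly_cauchy1 k m \<rho> q z)
      = (1 / r) ^ n / complex_of_real (qnum q (Suc n)) ^ k"
    unfolding trm by (rule cauchy_gen[OF q deg idn])
  also have "\<dots> = 1 / (r ^ n * complex_of_real (qnum q (n + 1)) ^ k)"
    by (simp add: power_one_over)
  finally show ?thesis by (simp only: r_def)
qed

lemma part3:
  fixes n k :: nat and \<rho> q :: real and z :: complex
  assumes rho: "\<rho> \<noteq> 0" and q: "0 \<le> q" "q < 1"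
  shows "(\<Sum>m=0..n. wstirling2 n m (- z / complex_of_real \<rho>) * complex_of_real \<rho> powi (- int m)
            * qpoly_cauchy2 k m \<rho> q z)
           = (- 1) ^ n / (complex_of_real \<rho> ^ n * complex_of_real (qnum q (n + 1)) ^ k)"
proof -
  define r where "r = complex_of_real \<rho>"
  have r0: "r \<noteq> 0" using rho by (simp add: r_def)
  define P where "P m = (\<Prod>i<m. [: z / r - of_nat i, - 1 / r :])" for m
  have deg: "degree (P m) \<le> m" for m
  proof -
    have "degree (P m) \<le> (\<Sum>i<m. degree [: z / r - of_nat i, - 1 / r :])"
      unfolding P_def using degree_prod_sum_le[of "{..<m}" "\<lambda>i. [: z / r - of_nat i, - 1 / r :]"]
      by (simp add: o_def)
    also have "\<dots> \<le> (\<Sum>i<m. 1)" by (intro sum_mono) simp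
    finally show ?thesis by simp
  qed
  have fp: "falling ((- y + z) / r) m = poly (P m) y" for y m
    unfolding falling_def P_def poly_prod
    by (intro prod.cong refl) (simp add: add_divide_distrib diff_divide_distrib)
  have trm: "wstirling2 n m (- z / r) * r powi (- int m) * qpoly_cauchy2 k m \<rho> q z
     = wstirling2 n m (- z / r) * jackson_multi q k (\<lambda>xs. poly (P m) (complex_of_real (prod_list xs)))" for m
  proof -
    have "r powi (- int m) * r ^ m = 1" using r0 by (simp add: power_int_minus)
    then show ?thesis unfolding qpoly_cauchy2_def r_def[symmetric] fp
      by (metis (no_types, lifting) mult.assoc mult_1)
  qed
  have idn: "(\<Sum>m=0..n. wstirling2 n m (- z / r) * poly (P m) y) = ((- 1 / r) * y) ^ n" for y
  proof -
    have "(\<Sum>m=0..n. wstirling2 n m (- z / r) * poly (P m) y) = (- z / r + (- y + z) / r) ^ n"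
      unfolding fp[symmetric] by (rule stir2)
    also have "- z / r + (- y + z) / r = (- 1 / r) * y" by (simp add: add_divide_distrib diff_divide_distrib)
    finally show ?thesis .
  qed
  have "(\<Sum>m=0..n. wstirling2 n m (- z / r) * r powi (- int m) * qpoly_cauchy2 k m \<rho> q z)
      = (- 1 / r) ^ n / complex_of_real (qnum q (Suc n)) ^ k"
    unfolding trm by (rule cauchy_gen[OF q deg idn])
  also have "\<dots> = (- 1) ^ n / (r ^ n * complex_of_real (qnum q (n + 1)) ^ k)"
    by (subst power_divide) (simp only: divide_divide_eq_left Suc_eq_plus1)
  finally show ?thesis by (simp only: r_def)
qed

theorem theorem6:
  fixes n k :: nat and \<rho> q :: real and z :: complex
  assumes "k \<ge> 1" and "\<rho> \<noteq> 0" and "0 \<le> q" and "q < 1"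
  shows "((\<Sum>m=0..n. wstirling1 n m (z / complex_of_real \<rho>) * complex_of_real \<rho> powi (- int m)
            * qpoly_bernoulli k m \<rho> q z)
           = fact n / (complex_of_real \<rho> ^ n * complex_of_real (qnum q (n + 1)) ^ k))
       \<and> ((\<Sum>m=0..n. wstirling2 n m (z / complex_of_real \<rho>) * complex_of_real \<rho> powi (- int m)
            * qpoly_cauchy1 k m \<rho> q z)
           = 1 / (complex_of_real \<rho> ^ n * complex_of_real (qnum q (n + 1)) ^ k))
       \<and> ((\<Sum>m=0..n. wstirling2 n m (- z / complex_of_real \<rho>) * complex_of_real \<rho> powi (- int m)
            * qpoly_cauchy2 k m \<rho> q z)
           = (- 1) ^ n / (complex_of_real \<rho> ^ n * complex_of_real (qnum q (n + 1)) ^ k))"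
  using part1[OF assms] part2[OF assms(2-4)] part3[OF assms(2-4)] by blast

end
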